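(* Consider the $N$-layer cascade of the context and let $2\le n\le N$. Let $U$ be an intermediate species and $\mathcal{M}$ a monomial in non-intermediate variables such that $u\mathcal{M}$ appears in $s_{n-1,L_{n-1}}^{(\ell_0)}$ for some $\ell_0\ge1$ and in no derivative $s_{n-1,L_{n-1}}^{(\ell)}$ with $1\le\ell<\ell_0$. Assume every variable of $\mathcal{M}$ corresponds to a species in $\mathscr{S}^{(k)}$ for some $1\le k\le n-1$ or in $\mathscr{S}^{(2N+1)}$, that $\mathcal{M}$ does not involve two variables corresponding to species that react together, and that $s_{n-1,L_{n-1}}$ does not divide $\mathcal{M}$. Let $C_{\mathcal{M}}$ and $\widetilde C_{\mathcal{M}}$ be the coefficients (possibly zero for the latter) of $u\mathcal{M}$ in $s_{n-1,L_{n-1}}^{(\ell_0)}$ and $s_{n-1,L_{n-1}}^{(\ell_0+1)}$. Then $\widehat{\mathcal{M}}:=s_{n,L_n-1}u\mathcal{M}$ appears in $s_{n,L_n}^{(\ell_0+2)}$ and in no $s_{n,L_n}^{(\ell)}$ with $1\le\ell<\ell_0+2$; its coefficient in $s_{n,L_n}^{(\ell_0+2)}$ is $c_{n,L_n}a_{n,L_n}C_{\mathcal{M}}$, and its coefficient in $s_{n,L_n}^{(\ell_0+3)}$ is $c_{n,L_n}a_{n,L_n}(\widetilde C_{\mathcal{M}}-K_{n,L_n}C_{\mathcal{M}})$, where $K_{n,L_n}=b_{n,L_n}+c_{n,L_n}$.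
   Context: Species are capital letters, concentrations lower-case letters. Mass-action system: $\dot{\mathbf{x}}=\sum_{y\to y'}k_{yy'}\mathbf{x}^y(y'-y)$. Total derivative: $\dot\varphi=\sum_i\frac{\partial\varphi}{\partial x_i}\dot x_i$ with $\dot x_i$ replaced by the right-hand side; $\varphi^{(\ell)}$ the $\ell$-th iterate, a polynomial in concentrations with coefficients polynomial in the rate constants; a monomial appears if its coefficient is nonzero. A non-intermediate $X_1$ reacts with a non-intermediate $X_2$ if there is a reaction $X_1+X_2\to W$ with $W$ intermediate. Cascade: $N\ge1$, $L_1,\dots,L_N\ge1$. Non-intermediate species $E$, pairwise distinct $F_1,\dots,F_N$, and $S_{m,j}$ ($1\le m\le N$, $0\le j\le L_m$), all distinct; intermediates $U_{m,j},V_{m,j}$ ($1\le j\le L_m$), all distinct. $S_{0,L_0}:=E$. For each $m$, $1\le j\le L_m$: $S_{m-1,L_{m-1}}+S_{m,j-1}\to U_{m,j}$ (rate $a_{m,j}$), $U_{m,j}\to S_{m-1,L_{m-1}}+S_{m,j-1}$ ($b_{m,j}$), $U_{m,j}\to S_{m-1,L_{m-1}}+S_{m,j}$ ($c_{m,j}$), $F_m+S_{m,j}\to V_{m,j}$ ($\tilde a_{m,j}$), $V_{m,j}\to F_m+S_{m,j}$ ($\tilde b_{m,j}$), $V_{m,j}\to F_m+S_{m,j-1}$ ($\tilde c_{m,j}$). Partition of non-intermediates: $\mathscr{S}^{(m)}=\{S_{m,0},\dots,S_{m,L_m}\}$, $\mathscr{S}^{(N+m)}=\{F_m\}$ ($1\le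 m\le N$), $\mathscr{S}^{(2N+1)}=\{E\}$. *)

theory Defs
  imports "HOL-Library.Poly_Mapping"
begin

datatype species = E | F nat | S nat nat | U nat nat | V nat nat

text \<open>Rate constants: RA = a, RB = b, RC = c, RAt = a-tilde, RBt = b-tilde, RCt = c-tilde.\<close>
datatype rate = RA nat nat | RB nat nat | RC nat nat | RAt nat nat | RBt nat nat | RCt nat nat

text \<open>Coefficients: polynomials with integer coefficients in the rate constants.\<close>
type_synonym coef = "(rate \<Rightarrow>\<^sub>0 nat) \<Rightarrow>\<^sub>0 int"
text \<open>Polynomials in the concentrations with coefficients polynomial in the rate constants.\<close>
type_synonym cpoly = "(species \<Rightarrow>\<^sub>0 nat) \<Rightarrow>\<^sub>0 coef"
text \<open>Complexes / monomials in the species.\<close>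
type_synonym cplx = "species \<Rightarrow>\<^sub>0 nat"

definition sg :: "species \<Rightarrow> cplx" where
  "sg X = Poly_Mapping.single X 1"

definition rc :: "rate \<Rightarrow> coef" where
  "rc k = Poly_Mapping.single (Poly_Mapping.single k 1) 1"

definition Var :: "species \<Rightarrow> cpoly" where
  "Var X = Poly_Mapping.single (sg X) 1"

definition cconst :: "coef \<Rightarrow> cpoly" where
  "cconst c = Poly_Mapping.single 0 c"

definition mon :: "cplx \<Rightarrow> cpoly" where
  "mon y = Poly_Mapping.single y 1"

text \<open>S_{m,L_m}, with the convention S_{0,L_0} := E.\<close>
definition lastS :: "(nat \<Rightarrow> nat) \<Rightarrow> nat \<Rightarrow> species" where
  "lastS L m = (if m = 0 then E else S m (L m))"

definition intermediates :: "nat \<Rightarrow> (nat \<Rightarrow> nat) \<Rightarrow> species set" where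
  "intermediates N L =
     {U m j | m j. 1 \<le> m \<and> m \<le> N \<and> 1 \<le> j \<and> j \<le> L m}
   \<union> {V m j | m j. 1 \<le> m \<and> m \<le> N \<and> 1 \<le> j \<and> j \<le> L m}"

definition non_intermediates :: "nat \<Rightarrow> (nat \<Rightarrow> nat) \<Rightarrow> species set" where
  "non_intermediates N L =
     {E} \<union> {F m | m. 1 \<le> m \<and> m \<le> N}
   \<union> {S m j | m j. 1 \<le> m \<and> m \<le> N \<and> j \<le> L m}"

definition species_set :: "nat \<Rightarrow> (nat \<Rightarrow> nat) \<Rightarrow> species set" where
  "species_set N L = non_intermediates N L \<union> intermediates N L"

definition reactions :: "nat \<Rightarrow> (nat \<Rightarrow> nat) \<Rightarrow> (cplx \<times> cplx \<times> rate) set" where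
  "reactions N L = (\<Union>m\<in>{1..N}. \<Union>j\<in>{1..L m}.
     { (sg (lastS L (m - 1)) + sg (S m (j - 1)), sg (U m j), RA m j),
       (sg (U m j), sg (lastS L (m - 1)) + sg (S m (j - 1)), RB m j),
       (sg (U m j), sg (lastS L (m - 1)) + sg (S m j), RC m j),
       (sg (F m) + sg (S m j), sg (V m j), RAt m j),
       (sg (V m j), sg (F m) + sg (S m j), RBt m j),
       (sg (V m j), sg (F m) + sg (S m (j - 1)), RCt m j) })"

definition rhs :: "nat \<Rightarrow> (nat \<Rightarrow> nat) \<Rightarrow> species \<Rightarrow> cpoly" where
  "rhs N L X = (\<Sum>(y, y', k)\<in>reactions N L.
      cconst (rc k) * mon y * of_int (int (Poly_Mapping.lookup y' X) - int (Poly_Mapping.lookup y X)))"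

definition pd :: "species \<Rightarrow> cpoly \<Rightarrow> cpoly" where
  "pd X p = (\<Sum>m\<in>Poly_Mapping.keys p. Poly_Mapping.single (m - sg X) (of_nat (Poly_Mapping.lookup m X) * Poly_Mapping.lookup p m))"

definition Dt :: "nat \<Rightarrow> (nat \<Rightarrow> nat) \<Rightarrow> cpoly \<Rightarrow> cpoly" where
  "Dt N L p = (\<Sum>X\<in>species_set N L. pd X p * rhs N L X)"

definition deriv_iter :: "nat \<Rightarrow> (nat \<Rightarrow> nat) \<Rightarrow> nat \<Rightarrow> cpoly \<Rightarrow> cpoly" where
  "deriv_iter N L l p = (Dt N L ^^ l) p"

text \<open>Coefficient of a monomial in a polynomial; it appears iff the coefficient is nonzero.\<close>
definition coeff_of :: "cpoly \<Rightarrow> cplx \<Rightarrow> coef" where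
  "coeff_of p m = Poly_Mapping.lookup p m"

definition reacts :: "nat \<Rightarrow> (nat \<Rightarrow> nat) \<Rightarrow> species \<Rightarrow> species \<Rightarrow> bool" where
  "reacts N L X1 X2 \<longleftrightarrow> X1 \<in> non_intermediates N L \<and> X2 \<in> non_intermediates N L \<and>
     (\<exists>W\<in>intermediates N L. \<exists>k. (sg X1 + sg X2, sg W, k) \<in> reactions N L)"

definition block :: "nat \<Rightarrow> (nat \<Rightarrow> nat) \<Rightarrow> nat \<Rightarrow> species set" where
  "block N L k =
     (if 1 \<le> k \<and> k \<le> N then {S k j | j. j \<le> L k}
      else if N + 1 \<le> k \<and> k \<le> 2 * N then {F (k - N)}
      else if k = 2 * N + 1 then {E} else {})"

end

theory Submission
  imports Defs
begin


lemma lookup_single_mult_add: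
  fixes P :: "'k::cancel_comm_monoid_add \<Rightarrow>\<^sub>0 'b::semiring_0"
  shows "Poly_Mapping.lookup (Poly_Mapping.single m c * P) (m + t) = c * Poly_Mapping.lookup P t"
proof -
  have "Poly_Mapping.lookup (Poly_Mapping.single m c * P) (m + t)
      = (\<Sum>l. Poly_Mapping.lookup (Poly_Mapping.single m c) l * (\<Sum>q. Poly_Mapping.lookup P q when m + t = l + q))"
    by (rule lookup_mult)
  also have "\<dots> = (\<Sum>l. (c * (\<Sum>q. Poly_Mapping.lookup P q when m + t = m + q)) when l = m)"
    by (rule Sum_any.cong) (simp add: lookup_single when_def)
  also have "\<dots> = c * (\<Sum>q. Poly_Mapping.lookup P q when m + t = m + q)" by simp
  also have "(\<Sum>q. Poly_Mapping.lookup P q when m + t = m + q) = (\<Sum>q. Poly_Mapping.lookup P q when q = t)"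
    by (rule Sum_any.cong) (auto simp: when_def)
  finally show ?thesis by simp
qed

lemma lookup_single0_mult:
  fixes P :: "'k::cancel_comm_monoid_add \<Rightarrow>\<^sub>0 'b::semiring_0"
  shows "Poly_Mapping.lookup (Poly_Mapping.single 0 c * P) Z = c * Poly_Mapping.lookup P Z"
  using lookup_single_mult_add[of 0 c P Z] by simp

lemma keys_single_mult:
  fixes P :: "'k::cancel_comm_monoid_add \<Rightarrow>\<^sub>0 'b::semiring_0"
  assumes "Z \<in> Poly_Mapping.keys (Poly_Mapping.single m c * P)"
  shows "\<exists>t. Z = m + t"
  using keys_mult[of "Poly_Mapping.single m c" P] assms
  by (auto split: if_splits)

lemma lookup_sg: "Poly_Mapping.lookup (sg X) Y = (if X = Y then 1 else 0)"
  by (simp add: sg_def lookup_single when_def)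

lemma pm_eq: "(A::species \<Rightarrow>\<^sub>0 nat) = B \<longleftrightarrow> (\<forall>X. Poly_Mapping.lookup A X = Poly_Mapping.lookup B X)"
  by (metis poly_mapping_eqI)

lemma pd_lookup:
  "Poly_Mapping.lookup (pd X P) Z = of_nat (Poly_Mapping.lookup Z X + 1) * Poly_Mapping.lookup P (Z + sg X)"
proof -
  define c where "c m = (of_nat (Poly_Mapping.lookup m X) * Poly_Mapping.lookup P m :: coef)" for m
  have "Poly_Mapping.lookup (pd X P) Z = (\<Sum>m\<in>Poly_Mapping.keys P. (c m when m - sg X = Z))"
    by (simp add: pd_def lookup_sum lookup_single c_def)
  also have "\<dots> = (\<Sum>m\<in>Poly_Mapping.keys P. (if m = Z + sg X then c m else 0))"
  proof (rule sum.cong)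
    fix m assume "m \<in> Poly_Mapping.keys P"
    show "(c m when m - sg X = Z) = (if m = Z + sg X then c m else 0)"
    proof (cases "Poly_Mapping.lookup m X = 0")
      case True
      then have "c m = 0" by (simp add: c_def)
      then show ?thesis by auto
    next
      case False
      have "m - sg X = Z \<longleftrightarrow> m = Z + sg X"
        using False by (auto simp: pm_eq lookup_minus lookup_add lookup_sg)
      then show ?thesis by (simp add: when_def)
    qed
  qed simp
  also have "\<dots> = c (Z + sg X)"
    by (simp add: sum.delta c_def in_keys_iff)
  finally show ?thesis by (simp add: c_def lookup_add lookup_sg)
qed

lemma pd_add: "pd X (P + Q) = pd X P + pd X Q"
  by (rule poly_mapping_eqI) (simp add: pd_lookup lookup_add distrib_left)

lemma pd_diff: "pd X (P - Q) = pd X P - pd X Q"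
  by (rule poly_mapping_eqI) (simp add: pd_lookup lookup_minus right_diff_distrib)

lemma pd_zero: "pd X 0 = 0"
  by (rule poly_mapping_eqI) (simp add: pd_lookup)

lemma pd_cmul: "pd X (Poly_Mapping.single 0 c * P) = Poly_Mapping.single 0 c * pd X P"
  by (rule poly_mapping_eqI) (simp add: pd_lookup lookup_single0_mult mult.left_commute)

lemma sg_eq_add_sg: "sg Y = Z + sg X \<longleftrightarrow> X = Y \<and> Z = 0"
proof
  assume h: "sg Y = Z + sg X"
  have "Poly_Mapping.lookup (sg Y) X = Poly_Mapping.lookup Z X + 1" using h by (simp add: lookup_add lookup_sg)
  then have "X = Y" by (auto simp: lookup_sg split: if_splits)
  with h show "X = Y \<and> Z = 0" by (auto simp: pm_eq lookup_add lookup_sg)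
qed auto

lemma pd_Var: "pd X (Var Y) = (if X = Y then 1 else 0)"
  by (rule poly_mapping_eqI) (auto simp: pd_lookup Var_def lookup_single when_def sg_eq_add_sg lookup_one)

lemma lookup_Var_mult:
  "Poly_Mapping.lookup (Var q * P) Z = (if 0 < Poly_Mapping.lookup Z q then Poly_Mapping.lookup P (Z - sg q) else 0)"
proof (cases "0 < Poly_Mapping.lookup Z q")
  case True
  then have "Z = sg q + (Z - sg q)" by (auto simp: pm_eq lookup_add lookup_minus lookup_sg)
  then have "Poly_Mapping.lookup (Var q * P) Z = Poly_Mapping.lookup (Var q * P) (sg q + (Z - sg q))" by simp
  also have "\<dots> = Poly_Mapping.lookup P (Z - sg q)" unfolding Var_def by (rule trans[OF lookup_single_mult_add]) simp
  finally show ?thesis using True by simp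
next
  case False
  have "Z \<notin> Poly_Mapping.keys (Var q * P)"
  proof
    assume "Z \<in> Poly_Mapping.keys (Var q * P)"
    then obtain t where "Z = sg q + t" unfolding Var_def using keys_single_mult by blast
    then show False using False by (simp add: lookup_add lookup_sg)
  qed
  then show ?thesis using False by (simp add: in_keys_iff)
qed

lemma pd_Var_mult: "pd X (Var q * P) = pd X (Var q) * P + Var q * pd X P"
proof (rule poly_mapping_eqI)
  fix Z
  show "Poly_Mapping.lookup (pd X (Var q * P)) Z = Poly_Mapping.lookup (pd X (Var q) * P + Var q * pd X P) Z"
  proof (cases "X = q")
    case True
    have e1: "Z + sg q - sg q = Z" by simp
    show ?thesis
    proof (cases "0 < Poly_Mapping.lookup Z q")
      case c: True
      have e2: "Z - sg q + sg q = Z" using c by (auto simp: pm_eq lookup_add lookup_minus lookup_sg)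
      have e3: "(of_nat (Poly_Mapping.lookup Z q) :: coef) = 1 + of_nat (Poly_Mapping.lookup (Z - sg q) q)"
        using c by (simp add: lookup_minus lookup_sg)
      show ?thesis using True c
        by (simp add: pd_lookup lookup_add lookup_Var_mult lookup_sg e1 e2 e3 pd_Var distrib_right)
    next
      case c: False
      show ?thesis using True c
        by (simp add: pd_lookup lookup_add lookup_Var_mult lookup_sg e1 pd_Var)
    qed
  next
    case False
    show ?thesis
    proof (cases "0 < Poly_Mapping.lookup Z q")
      case c: True
      have e2: "Z + sg X - sg q = Z - sg q + sg X" using c by (auto simp: pm_eq lookup_add lookup_minus lookup_sg)
      show ?thesis using False c
        by (simp add: pd_lookup lookup_add lookup_Var_mult lookup_sg e2 pd_Var lookup_minus)
    next
      case c: False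
      show ?thesis using False c
        by (simp add: pd_lookup lookup_add lookup_Var_mult lookup_sg pd_Var)
    qed
  qed
qed

lemma fin_species: "finite (species_set N L)"
proof -
  have "intermediates N L \<subseteq> (\<lambda>(m,j). U m j) ` (SIGMA m:{1..N}. {1..L m}) \<union> (\<lambda>(m,j). V m j) ` (SIGMA m:{1..N}. {1..L m})"
    by (auto simp: intermediates_def)
  moreover have "non_intermediates N L \<subseteq> {E} \<union> F ` {1..N} \<union> (\<lambda>(m,j). S m j) ` (SIGMA m:{1..N}. {0..L m})"
    by (auto simp: non_intermediates_def)
  moreover have "finite ((\<lambda>(m,j). U m j) ` (SIGMA m:{1..N}. {1..L m}) \<union> (\<lambda>(m,j). V m j) ` (SIGMA m:{1..N}. {1..L m}))" by auto
  moreover have "finite ({E} \<union> F ` {1..N} \<union> (\<lambda>(m,j). S m j) ` (SIGMA m:{1..N}. {0..L m}))" by auto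
  ultimately show ?thesis unfolding species_set_def by (meson finite_Un finite_subset)
qed

lemma fin_reactions: "finite (reactions N L)"
  unfolding reactions_def by (intro finite_UN_I finite_atLeastAtMost finite.insertI finite.emptyI)

lemma Dt_add: "Dt N L (P + Q) = Dt N L P + Dt N L Q"
  by (simp add: Dt_def pd_add distrib_right sum.distrib)

lemma Dt_diff: "Dt N L (P - Q) = Dt N L P - Dt N L Q"
  by (simp add: Dt_def pd_diff left_diff_distrib sum_subtractf)

lemma Dt_zero: "Dt N L 0 = 0"
  by (simp add: Dt_def pd_zero)

lemma Dt_cmul: "Dt N L (Poly_Mapping.single 0 c * P) = Poly_Mapping.single 0 c * Dt N L P"
  by (simp add: Dt_def pd_cmul sum_distrib_left mult.assoc)

lemma Dt_Var: "X \<in> species_set N L \<Longrightarrow> Dt N L (Var X) = rhs N L X"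
proof -
  assume X: "X \<in> species_set N L"
  have "Dt N L (Var X) = (\<Sum>Y\<in>species_set N L. if Y = X then rhs N L Y else 0)"
    unfolding Dt_def by (rule sum.cong) (auto simp: pd_Var)
  also have "\<dots> = rhs N L X" using fin_species[of N L] X by (simp add: sum.delta')
  finally show ?thesis .
qed

lemma Dt_Var_mult: "q \<in> species_set N L \<Longrightarrow> Dt N L (Var q * P) = Var q * Dt N L P + P * rhs N L q"
proof -
  assume q: "q \<in> species_set N L"
  have "Dt N L (Var q * P) = (\<Sum>X\<in>species_set N L. (pd X (Var q) * P) * rhs N L X) + (\<Sum>X\<in>species_set N L. Var q * (pd X P * rhs N L X))"
    by (simp add: Dt_def pd_Var_mult distrib_right sum.distrib mult.assoc)
  also have "(\<Sum>X\<in>species_set N L. (pd X (Var q) * P) * rhs N L X) = P * rhs N L q"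
  proof -
    have "(\<Sum>X\<in>species_set N L. (pd X (Var q) * P) * rhs N L X) = (\<Sum>X\<in>species_set N L. if X = q then P * rhs N L X else 0)"
      by (rule sum.cong) (auto simp: pd_Var)
    also have "\<dots> = P * rhs N L q" using fin_species[of N L] q by (simp add: sum.delta')
    finally show ?thesis .
  qed
  also have "(\<Sum>X\<in>species_set N L. Var q * (pd X P * rhs N L X)) = Var q * Dt N L P"
    by (simp add: Dt_def sum_distrib_left)
  finally show ?thesis by (simp add: add.commute)
qed

lemma iter_add: "(Dt N L ^^ k) (P + Q) = (Dt N L ^^ k) P + (Dt N L ^^ k) Q"
  by (induction k) (simp_all add: Dt_add)

lemma iter_diff: "(Dt N L ^^ k) (P - Q) = (Dt N L ^^ k) P - (Dt N L ^^ k) Q"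
  by (induction k) (simp_all add: Dt_diff)

lemma iter_cmul: "(Dt N L ^^ k) (Poly_Mapping.single 0 c * P) = Poly_Mapping.single 0 c * (Dt N L ^^ k) P"
  by (induction k) (simp_all add: Dt_cmul)


lemma rhs_term: "cconst c * mon y * of_int d = Poly_Mapping.single y (c * of_int d)"
proof -
  have h: "(of_int d :: cpoly) = Poly_Mapping.single 0 (of_int d)" by simp
  have "cconst c * mon y * of_int d = Poly_Mapping.single 0 c * Poly_Mapping.single y 1 * Poly_Mapping.single 0 (of_int d)"
    by (simp only: cconst_def mon_def h)
  also have "\<dots> = Poly_Mapping.single (0 + y + 0) (c * 1 * of_int d)" by (simp only: mult_single)
  finally show ?thesis by simp
qed


lemma rhs_alt: "rhs N L X = (\<Sum>(y, y', k)\<in>reactions N L.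
      Poly_Mapping.single y (rc k * of_int (int (Poly_Mapping.lookup y' X) - int (Poly_Mapping.lookup y X))))"
  unfolding rhs_def by (simp only: rhs_term)


lemma keys_rhs:
  assumes "Z \<in> Poly_Mapping.keys (rhs N L X)"
  shows "\<exists>y' k. (Z, y', k) \<in> reactions N L \<and> Poly_Mapping.lookup y' X \<noteq> Poly_Mapping.lookup Z X"
proof -
  define f where "f = (\<lambda>(y::cplx, y'::cplx, k). Poly_Mapping.single y (rc k * of_int (int (Poly_Mapping.lookup y' X) - int (Poly_Mapping.lookup y X))))"
  have "Z \<in> Poly_Mapping.keys (sum f (reactions N L))" using assms unfolding rhs_alt f_def .
  then have "Z \<in> (\<Union>r\<in>reactions N L. Poly_Mapping.keys (f r))" using keys_sum[of f "reactions N L"] by (rule subsetD[rotated])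
  then obtain y y' k where r: "(y, y', k) \<in> reactions N L" and Zk: "Z \<in> Poly_Mapping.keys (f (y, y', k))"
    by auto
  from Zk have "Z = y" and "int (Poly_Mapping.lookup y' X) - int (Poly_Mapping.lookup y X) \<noteq> 0"
    by (auto simp: f_def split: if_splits)
  then show ?thesis using r by auto
qed

definition step :: "nat \<Rightarrow> (nat \<Rightarrow> nat) \<Rightarrow> cplx \<Rightarrow> cplx \<Rightarrow> bool" where
  "step N L Z Z' \<longleftrightarrow> (\<exists>X y y' k. (y, y', k) \<in> reactions N L \<and> Poly_Mapping.lookup y' X \<noteq> Poly_Mapping.lookup y X
      \<and> 0 < Poly_Mapping.lookup Z X \<and> Z' = Z - sg X + y)"


lemma keys_Dt:
  assumes "Z' \<in> Poly_Mapping.keys (Dt N L P)"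
  shows "\<exists>Z\<in>Poly_Mapping.keys P. step N L Z Z'"
proof -
  have "Z' \<in> (\<Union>X\<in>species_set N L. Poly_Mapping.keys (pd X P * rhs N L X))"
    using assms keys_sum[of "\<lambda>X. pd X P * rhs N L X" "species_set N L"] unfolding Dt_def by (rule subsetD[rotated])
  then obtain X where "Z' \<in> Poly_Mapping.keys (pd X P * rhs N L X)" by blast
  then have "Z' \<in> {a + b |a b. a \<in> Poly_Mapping.keys (pd X P) \<and> b \<in> Poly_Mapping.keys (rhs N L X)}"
    using keys_mult[of "pd X P" "rhs N L X"] by (rule subsetD[rotated])
  then obtain a b where ab: "Z' = a + b" "a \<in> Poly_Mapping.keys (pd X P)" "b \<in> Poly_Mapping.keys (rhs N L X)"
    by blast
  from ab(3) obtain y' k where r: "(b, y', k) \<in> reactions N L" "Poly_Mapping.lookup y' X \<noteq> Poly_Mapping.lookup b X"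
    using keys_rhs by blast
  from ab(2) have "Poly_Mapping.lookup P (a + sg X) \<noteq> 0" by (auto simp: in_keys_iff pd_lookup)
  then have inP: "a + sg X \<in> Poly_Mapping.keys P" by (simp add: in_keys_iff)
  have "step N L (a + sg X) Z'" unfolding step_def
    using r ab(1) by (intro exI[of _ X] exI[of _ b] exI[of _ y'] exI[of _ k]) (simp add: lookup_add lookup_sg)
  with inP show ?thesis by blast
qed

lemma keys_iter_closed:
  assumes cl: "\<And>Z Z'. Z \<in> A \<Longrightarrow> step N L Z Z' \<Longrightarrow> Z' \<in> A"
    and P: "Poly_Mapping.keys P \<subseteq> A"
  shows "Poly_Mapping.keys ((Dt N L ^^ k) P) \<subseteq> A"
proof (induction k)
  case 0 then show ?case using P by simp
next
  case (Suc k)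
  show ?case
  proof
    fix Z' assume "Z' \<in> Poly_Mapping.keys ((Dt N L ^^ Suc k) P)"
    then have "Z' \<in> Poly_Mapping.keys (Dt N L ((Dt N L ^^ k) P))" by simp
    then obtain Z where "Z \<in> Poly_Mapping.keys ((Dt N L ^^ k) P)" "step N L Z Z'" using keys_Dt by blast
    then show "Z' \<in> A" using Suc cl by blast
  qed
qed

definition subm :: "cplx \<Rightarrow> cplx \<Rightarrow> bool" where
  "subm y Z \<longleftrightarrow> (\<forall>X. Poly_Mapping.lookup y X \<le> Poly_Mapping.lookup Z X)"

lemma step_lookup: "Poly_Mapping.lookup (Z - sg X + y) Y = Poly_Mapping.lookup Z Y - (if X = Y then 1 else 0) + Poly_Mapping.lookup y Y"
  by (simp add: lookup_add lookup_minus lookup_sg)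

lemma step_sub: "step N L Z Z' \<Longrightarrow> \<exists>y y' k. (y, y', k) \<in> reactions N L \<and> subm y Z'"
proof -
  assume "step N L Z Z'"
  then obtain X y y' k where "(y, y', k) \<in> reactions N L" "Z' = Z - sg X + y" unfolding step_def by blast
  moreover have "subm y (Z - sg X + y)" by (simp add: subm_def lookup_add)
  ultimately show ?thesis by blast
qed

definition AA :: "nat \<Rightarrow> (nat \<Rightarrow> nat) \<Rightarrow> cplx \<Rightarrow> cplx \<Rightarrow> bool" where
  "AA N L T y \<longleftrightarrow> (\<exists>y' k. (y, y', k) \<in> reactions N L) \<or> (\<exists>X. y = sg X \<and> Poly_Mapping.lookup T X = 0)"

definition Gam :: "nat \<Rightarrow> (nat \<Rightarrow> nat) \<Rightarrow> cplx \<Rightarrow> cplx \<Rightarrow> bool" where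
  "Gam N L T Z \<longleftrightarrow> (\<exists>y1 y2. AA N L T y1 \<and> AA N L T y2 \<and> subm (y1 + y2) Z)"

lemma Gam_step:
  assumes G: "Gam N L T Z" and st: "step N L Z Z'"
  shows "Gam N L T Z'"
proof -
  from st obtain X y0 y0' k where r: "(y0, y0', k) \<in> reactions N L" and pos: "0 < Poly_Mapping.lookup Z X"
    and Z': "Z' = Z - sg X + y0" unfolding step_def by blast
  from G obtain y1 y2 where A: "AA N L T y1" "AA N L T y2" and s: "subm (y1 + y2) Z" unfolding Gam_def by blast
  have A0: "AA N L T y0" using r unfolding AA_def by blast
  have s': "\<And>Y. Poly_Mapping.lookup y1 Y + Poly_Mapping.lookup y2 Y \<le> Poly_Mapping.lookup Z Y"
    using s by (simp add: subm_def lookup_add)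
  show ?thesis
  proof (cases "Poly_Mapping.lookup y1 X + Poly_Mapping.lookup y2 X < Poly_Mapping.lookup Z X")
    case True
    have "subm (y1 + y2) Z'" unfolding subm_def Z'
    proof (intro allI)
      fix Y show "Poly_Mapping.lookup (y1 + y2) Y \<le> Poly_Mapping.lookup (Z - sg X + y0) Y"
        using s'[of Y] True by (auto simp: lookup_add lookup_minus lookup_sg)
    qed
    then show ?thesis using A unfolding Gam_def by blast
  next
    case False
    show ?thesis
    proof (cases "0 < Poly_Mapping.lookup y1 X")
      case True
      have "subm (y0 + y2) Z'" unfolding subm_def Z'
      proof (intro allI)
        fix Y show "Poly_Mapping.lookup (y0 + y2) Y \<le> Poly_Mapping.lookup (Z - sg X + y0) Y"
          using s'[of Y] True by (auto simp: lookup_add lookup_minus lookup_sg)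
      qed
      then show ?thesis using A A0 unfolding Gam_def by blast
    next
      case c: False
      have "subm (y0 + y1) Z'" unfolding subm_def Z'
      proof (intro allI)
        fix Y show "Poly_Mapping.lookup (y0 + y1) Y \<le> Poly_Mapping.lookup (Z - sg X + y0) Y"
          using s'[of Y] c pos by (auto simp: lookup_add lookup_minus lookup_sg)
      qed
      then show ?thesis using A A0 unfolding Gam_def by blast
    qed
  qed
qed

lemma reaction_cases:
  assumes "r \<in> reactions N L"
  obtains m j where "1 \<le> m" "m \<le> N" "1 \<le> j" "j \<le> L m"
    "r = (sg (lastS L (m - 1)) + sg (S m (j - 1)), sg (U m j), RA m j) \<or>
     r = (sg (U m j), sg (lastS L (m - 1)) + sg (S m (j - 1)), RB m j) \<or>
     r = (sg (U m j), sg (lastS L (m - 1)) + sg (S m j), RC m j) \<or>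
     r = (sg (F m) + sg (S m j), sg (V m j), RAt m j) \<or>
     r = (sg (V m j), sg (F m) + sg (S m j), RBt m j) \<or>
     r = (sg (V m j), sg (F m) + sg (S m (j - 1)), RCt m j)"
  using assms unfolding reactions_def by auto

lemma react_U:
  assumes "(y, y', k) \<in> reactions N L" "Poly_Mapping.lookup y' (U a b) \<noteq> Poly_Mapping.lookup y (U a b)"
  shows "y = sg (U a b) \<or> y = sg (lastS L (a - 1)) + sg (S a (b - 1))"
  using assms(1)
proof (rule reaction_cases)
  fix m j assume "1 \<le> m" "m \<le> N" "1 \<le> j" "j \<le> L m"
    and "(y, y', k) = (sg (lastS L (m - 1)) + sg (S m (j - 1)), sg (U m j), RA m j) \<or>
     (y, y', k) = (sg (U m j), sg (lastS L (m - 1)) + sg (S m (j - 1)), RB m j) \<or>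
     (y, y', k) = (sg (U m j), sg (lastS L (m - 1)) + sg (S m j), RC m j) \<or>
     (y, y', k) = (sg (F m) + sg (S m j), sg (V m j), RAt m j) \<or>
     (y, y', k) = (sg (V m j), sg (F m) + sg (S m j), RBt m j) \<or>
     (y, y', k) = (sg (V m j), sg (F m) + sg (S m (j - 1)), RCt m j)"
  then show ?thesis using assms(2) by (auto simp: lookup_add lookup_sg lastS_def split: if_splits)
qed

lemma react_V:
  assumes "(y, y', k) \<in> reactions N L" "Poly_Mapping.lookup y' (V a b) \<noteq> Poly_Mapping.lookup y (V a b)"
  shows "y = sg (V a b) \<or> y = sg (F a) + sg (S a b)"
  using assms(1)
proof (rule reaction_cases)
  fix m j assume "1 \<le> m" "m \<le> N" "1 \<le> j" "j \<le> L m"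
    and "(y, y', k) = (sg (lastS L (m - 1)) + sg (S m (j - 1)), sg (U m j), RA m j) \<or>
     (y, y', k) = (sg (U m j), sg (lastS L (m - 1)) + sg (S m (j - 1)), RB m j) \<or>
     (y, y', k) = (sg (U m j), sg (lastS L (m - 1)) + sg (S m j), RC m j) \<or>
     (y, y', k) = (sg (F m) + sg (S m j), sg (V m j), RAt m j) \<or>
     (y, y', k) = (sg (V m j), sg (F m) + sg (S m j), RBt m j) \<or>
     (y, y', k) = (sg (V m j), sg (F m) + sg (S m (j - 1)), RCt m j)"
  then show ?thesis using assms(2) by (auto simp: lookup_add lookup_sg lastS_def split: if_splits)
qed

lemma react_U_full:
  assumes "(y, y', k) \<in> reactions N L" "Poly_Mapping.lookup y' (U a b) \<noteq> Poly_Mapping.lookup y (U a b)"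
  shows "(y, y', k) = (sg (lastS L (a - 1)) + sg (S a (b - 1)), sg (U a b), RA a b) \<or>
         (y, y', k) = (sg (U a b), sg (lastS L (a - 1)) + sg (S a (b - 1)), RB a b) \<or>
         (y, y', k) = (sg (U a b), sg (lastS L (a - 1)) + sg (S a b), RC a b)"
  using assms(1)
proof (rule reaction_cases)
  fix m j assume "1 \<le> m" "m \<le> N" "1 \<le> j" "j \<le> L m"
    and "(y, y', k) = (sg (lastS L (m - 1)) + sg (S m (j - 1)), sg (U m j), RA m j) \<or>
     (y, y', k) = (sg (U m j), sg (lastS L (m - 1)) + sg (S m (j - 1)), RB m j) \<or>
     (y, y', k) = (sg (U m j), sg (lastS L (m - 1)) + sg (S m j), RC m j) \<or>
     (y, y', k) = (sg (F m) + sg (S m j), sg (V m j), RAt m j) \<or>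
     (y, y', k) = (sg (V m j), sg (F m) + sg (S m j), RBt m j) \<or>
     (y, y', k) = (sg (V m j), sg (F m) + sg (S m (j - 1)), RCt m j)"
  then show ?thesis using assms(2) by (auto simp: lookup_add lookup_sg lastS_def split: if_splits)
qed

lemma react_S_last:
  assumes "(y, y', k) \<in> reactions N L" "Poly_Mapping.lookup y' (S a (L a)) \<noteq> Poly_Mapping.lookup y (S a (L a))"
    and "1 \<le> a"
  shows "(\<exists>j. y = sg (S a (L a)) + sg (S (a + 1) (j - 1))) \<or> (\<exists>j. y = sg (U (a + 1) j)) \<or>
         (y, y', k) = (sg (U a (L a)), sg (lastS L (a - 1)) + sg (S a (L a)), RC a (L a)) \<or>
         y = sg (F a) + sg (S a (L a)) \<or> y = sg (V a (L a))"
  using assms(1)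
proof (rule reaction_cases)
  fix m j assume mj: "1 \<le> m" "m \<le> N" "1 \<le> j" "j \<le> L m"
    and cs: "(y, y', k) = (sg (lastS L (m - 1)) + sg (S m (j - 1)), sg (U m j), RA m j) \<or>
     (y, y', k) = (sg (U m j), sg (lastS L (m - 1)) + sg (S m (j - 1)), RB m j) \<or>
     (y, y', k) = (sg (U m j), sg (lastS L (m - 1)) + sg (S m j), RC m j) \<or>
     (y, y', k) = (sg (F m) + sg (S m j), sg (V m j), RAt m j) \<or>
     (y, y', k) = (sg (V m j), sg (F m) + sg (S m j), RBt m j) \<or>
     (y, y', k) = (sg (V m j), sg (F m) + sg (S m (j - 1)), RCt m j)"
  have last: "lastS L (m - 1) = S a (L a) \<longleftrightarrow> m = a + 1" using mj assms(3) by (auto simp: lastS_def)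
  have nj: "S m (j - 1) \<noteq> S a (L a)" using mj by auto
  from cs show ?thesis
  proof (elim disjE)
    assume h: "(y, y', k) = (sg (lastS L (m - 1)) + sg (S m (j - 1)), sg (U m j), RA m j)"
    then have "lastS L (m - 1) = S a (L a)" using assms(2) nj by (auto simp: lookup_add lookup_sg lastS_def split: if_splits)
    then show ?thesis using h last by auto
  next
    assume h: "(y, y', k) = (sg (U m j), sg (lastS L (m - 1)) + sg (S m (j - 1)), RB m j)"
    then have "lastS L (m - 1) = S a (L a)" using assms(2) nj by (auto simp: lookup_add lookup_sg lastS_def split: if_splits)
    then show ?thesis using h last by auto
  next
    assume h: "(y, y', k) = (sg (U m j), sg (lastS L (m - 1)) + sg (S m j), RC m j)"
    then have "lastS L (m - 1) = S a (L a) \<or> S m j = S a (L a)" using assms(2) by (auto simp: lookup_add lookup_sg lastS_def split: if_splits)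
    then show ?thesis using h last by auto
  next
    assume h: "(y, y', k) = (sg (F m) + sg (S m j), sg (V m j), RAt m j)"
    then have "S m j = S a (L a)" using assms(2) by (auto simp: lookup_add lookup_sg split: if_splits)
    then show ?thesis using h by auto
  next
    assume h: "(y, y', k) = (sg (V m j), sg (F m) + sg (S m j), RBt m j)"
    then have "S m j = S a (L a)" using assms(2) by (auto simp: lookup_add lookup_sg split: if_splits)
    then show ?thesis using h by auto
  next
    assume h: "(y, y', k) = (sg (V m j), sg (F m) + sg (S m (j - 1)), RCt m j)"
    then show ?thesis using assms(2) nj by (auto simp: lookup_add lookup_sg split: if_splits)
  qed
qed




lemma reaction_mem:
  assumes "1 \<le> m" "m \<le> N" "1 \<le> j" "j \<le> L m"
  shows "(sg (lastS L (m - 1)) + sg (S m (j - 1)), sg (U m j), RA m j) \<in> reactions N L"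
    "(sg (U m j), sg (lastS L (m - 1)) + sg (S m (j - 1)), RB m j) \<in> reactions N L"
    "(sg (U m j), sg (lastS L (m - 1)) + sg (S m j), RC m j) \<in> reactions N L"
    "(sg (F m) + sg (S m j), sg (V m j), RAt m j) \<in> reactions N L"
    "(sg (V m j), sg (F m) + sg (S m j), RBt m j) \<in> reactions N L"
    "(sg (V m j), sg (F m) + sg (S m (j - 1)), RCt m j) \<in> reactions N L"
  unfolding reactions_def using assms by (intro UN_I[of m] UN_I[of j]; simp)+

context
  fixes N n l0 :: nat and L :: "nat \<Rightarrow> nat" and W :: species and M :: cplx
  assumes N_pos: "1 \<le> N"
    and L_pos: "\<forall>m. 1 \<le> m \<and> m \<le> N \<longrightarrow> 1 \<le> L m"
    and n_bounds: "2 \<le> n" "n \<le> N"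
    and W_int: "W \<in> intermediates N L"
    and l0_pos: "1 \<le> l0"
    and appears: "coeff_of (deriv_iter N L l0 (Var (S (n - 1) (L (n - 1))))) (sg W + M) \<noteq> 0"
    and first: "\<forall>l. 1 \<le> l \<and> l < l0 \<longrightarrow>
                  coeff_of (deriv_iter N L l (Var (S (n - 1) (L (n - 1))))) (sg W + M) = 0"
    and M_vars: "\<forall>X\<in>Poly_Mapping.keys M. (\<exists>k. 1 \<le> k \<and> k \<le> n - 1 \<and> X \<in> block N L k)
                              \<or> X \<in> block N L (2 * N + 1)"
    and M_noreact: "\<forall>X1\<in>Poly_Mapping.keys M. \<forall>X2\<in>Poly_Mapping.keys M. (X1 \<noteq> X2 \<or> 2 \<le> Poly_Mapping.lookup M X1)
                              \<longrightarrow> \<not> reacts N L X1 X2"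
    and M_nodiv: "Poly_Mapping.lookup M (S (n - 1) (L (n - 1))) = 0"
begin

abbreviation "TT \<equiv> sg (S n (L n - 1)) + sg W + M"

lemma Ln: "1 \<le> L n" "1 \<le> L (n - 1)"
proof -
  have "1 \<le> n - 1" "n - 1 \<le> N" "1 \<le> n" using n_bounds by auto
  then show "1 \<le> L n" "1 \<le> L (n - 1)" using L_pos n_bounds by auto
qed

lemma W_cases: "\<exists>m j. W = U m j \<or> W = V m j"
  using W_int unfolding intermediates_def by auto

lemma keysM:
  assumes "X \<in> Poly_Mapping.keys M"
  shows "(\<exists>k j. X = S k j \<and> 1 \<le> k \<and> k \<le> n - 1 \<and> j \<le> L k) \<or> X = E"
proof -
  from M_vars assms have "(\<exists>k. 1 \<le> k \<and> k \<le> n - 1 \<and> X \<in> block N L k) \<or> X \<in> block N L (2 * N + 1)" by blast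
  then show ?thesis
  proof
    assume "\<exists>k. 1 \<le> k \<and> k \<le> n - 1 \<and> X \<in> block N L k"
    then obtain k where k: "1 \<le> k" "k \<le> n - 1" "X \<in> block N L k" by blast
    then have "k \<le> N" using n_bounds by simp
    with k show ?thesis unfolding block_def by auto
  next
    assume "X \<in> block N L (2 * N + 1)"
    then show ?thesis unfolding block_def by (auto split: if_splits)
  qed
qed

lemma lookM:
  assumes "Poly_Mapping.lookup M X \<noteq> 0"
  shows "(\<exists>k j. X = S k j \<and> 1 \<le> k \<and> k \<le> n - 1 \<and> j \<le> L k) \<or> X = E"
  using keysM assms by (simp add: in_keys_iff)

lemma lookT: "Poly_Mapping.lookup TT X = (if X = S n (L n - 1) then 1 else 0) + (if X = W then 1 else 0) + Poly_Mapping.lookup M X"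
  by (simp add: lookup_add lookup_sg)

lemma lookM_UV: "Poly_Mapping.lookup M (U a b) = 0" "Poly_Mapping.lookup M (V a b) = 0" "Poly_Mapping.lookup M (F a) = 0"
  using lookM by blast+

lemma lookM_S: "n \<le> a \<Longrightarrow> Poly_Mapping.lookup M (S a b) = 0"
  using lookM n_bounds by fastforce

lemma lookM_W: "Poly_Mapping.lookup M W = 0"
  using W_cases lookM_UV by auto

lemma W_ne: "W \<noteq> S a b" "W \<noteq> E" "W \<noteq> F a"
  using W_cases by auto

lemma lookT_W: "Poly_Mapping.lookup TT W = 1"
  using W_ne by (auto simp: lookup_add lookup_sg lookM_W)

lemma lookT_q: "0 < Poly_Mapping.lookup TT (S n (L n - 1))"
  by (auto simp: lookup_add lookup_sg lookM_W)

lemma lookT_p: "Poly_Mapping.lookup TT (S (n - 1) (L (n - 1))) = 0"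
  using W_ne n_bounds M_nodiv by (auto simp: lookup_add lookup_sg lookM_W)

lemma lookT_S: "n \<le> a \<Longrightarrow> S a b \<noteq> S n (L n - 1) \<Longrightarrow> Poly_Mapping.lookup TT (S a b) = 0"
  using W_ne lookM_S by (auto simp: lookup_add lookup_sg lookM_W)

lemma lookT_F: "Poly_Mapping.lookup TT (F a) = 0"
  using W_ne lookM_UV by (auto simp: lookup_add lookup_sg lookM_W)

lemma M_nonreact2:
  assumes "Poly_Mapping.lookup M A \<noteq> 0" "Poly_Mapping.lookup M B \<noteq> 0" "A \<noteq> B"
    and "(sg A + sg B, sg Wi, k) \<in> reactions N L" "Wi \<in> intermediates N L"
  shows False
proof -
  have "A \<in> non_intermediates N L" "B \<in> non_intermediates N L"
    using lookM[OF assms(1)] lookM[OF assms(2)] n_bounds unfolding non_intermediates_def by auto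
  then have "reacts N L A B" unfolding reacts_def using assms(4,5) by blast
  moreover have "A \<in> Poly_Mapping.keys M" "B \<in> Poly_Mapping.keys M" using assms(1,2) by (simp_all add: in_keys_iff)
  ultimately show False using M_noreact assms(3) by blast
qed

lemma TT_nz: "Poly_Mapping.lookup TT X \<noteq> 0 \<Longrightarrow> X = S n (L n - 1) \<or> X = W \<or> Poly_Mapping.lookup M X \<noteq> 0"
  by (auto simp: lookup_add lookup_sg split: if_splits)

lemma subm_pair: "subm (sg A + sg B) Z \<Longrightarrow> A \<noteq> B \<Longrightarrow> Poly_Mapping.lookup Z A \<noteq> 0 \<and> Poly_Mapping.lookup Z B \<noteq> 0"
  unfolding subm_def by (metis (no_types, lifting) add.commute add_0 le_zero_eq lookup_add lookup_sg one_neq_zero)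

lemma subm_sing: "subm (sg A) Z \<Longrightarrow> Poly_Mapping.lookup Z A \<noteq> 0"
  unfolding subm_def by (metis le_zero_eq lookup_sg one_neq_zero)

lemma T_sub_react:
  assumes r: "(y, y', k) \<in> reactions N L" and sub: "subm y TT"
  shows "y = sg W"
  using r
proof (rule reaction_cases)
  fix m j assume mj: "1 \<le> m" "m \<le> N" "1 \<le> j" "j \<le> L m"
    and cs: "(y, y', k) = (sg (lastS L (m - 1)) + sg (S m (j - 1)), sg (U m j), RA m j) \<or>
     (y, y', k) = (sg (U m j), sg (lastS L (m - 1)) + sg (S m (j - 1)), RB m j) \<or>
     (y, y', k) = (sg (U m j), sg (lastS L (m - 1)) + sg (S m j), RC m j) \<or>
     (y, y', k) = (sg (F m) + sg (S m j), sg (V m j), RAt m j) \<or>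
     (y, y', k) = (sg (V m j), sg (F m) + sg (S m j), RBt m j) \<or>
     (y, y', k) = (sg (V m j), sg (F m) + sg (S m (j - 1)), RCt m j)"
  have Uint: "U m j \<in> intermediates N L" using mj unfolding intermediates_def by blast
  consider (a) "y = sg (lastS L (m - 1)) + sg (S m (j - 1))" "(y, y', k) = (sg (lastS L (m - 1)) + sg (S m (j - 1)), sg (U m j), RA m j)"
    | (u) "y = sg (U m j)" | (f) "y = sg (F m) + sg (S m j)" | (v) "y = sg (V m j)"
    using cs by auto
  then show ?thesis
  proof cases
    case a
    let ?A = "lastS L (m - 1)" and ?B = "S m (j - 1)"
    have AB: "?A \<noteq> ?B" using mj by (auto simp: lastS_def)
    have nz: "Poly_Mapping.lookup TT ?A \<noteq> 0" "Poly_Mapping.lookup TT ?B \<noteq> 0"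
      using subm_pair[OF sub[unfolded a(1)] AB] by auto
    have AW: "?A \<noteq> W" "?B \<noteq> W" using W_ne by (auto simp: lastS_def)
    show ?thesis
    proof (cases "?B = S n (L n - 1)")
      case True
      then have "m = n" "j = L n" using mj Ln by auto
      then have "?A = S (n - 1) (L (n - 1))" using n_bounds by (simp add: lastS_def)
      then show ?thesis using nz lookT_p by simp
    next
      case Bq: False
      show ?thesis
      proof (cases "?A = S n (L n - 1)")
        case True
        then have "m - 1 \<noteq> 0" by (auto simp: lastS_def)
        with True have "m - 1 = n" "L (m - 1) = L n - 1" by (auto simp: lastS_def)
        then show ?thesis using Ln by simp
      next
        case Aq: False
        have "Poly_Mapping.lookup M ?A \<noteq> 0" "Poly_Mapping.lookup M ?B \<noteq> 0"
          using TT_nz[OF nz(1)] TT_nz[OF nz(2)] AW Aq Bq by auto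
        moreover have "(sg ?A + sg ?B, sg (U m j), RA m j) \<in> reactions N L" using r a(2) by simp
        ultimately show ?thesis using M_nonreact2 AB Uint by blast
      qed
    qed
  next
    case u
    then have "Poly_Mapping.lookup TT (U m j) \<noteq> 0" using subm_sing[of "U m j" TT] sub by simp
    then have "U m j = W" using TT_nz[of "U m j"] lookM_UV by auto
    then show ?thesis using u by simp
  next
    case v
    then have "Poly_Mapping.lookup TT (V m j) \<noteq> 0" using subm_sing[of "V m j" TT] sub by simp
    then have "V m j = W" using TT_nz[of "V m j"] lookM_UV by auto
    then show ?thesis using v by simp
  next
    case f
    have "F m \<noteq> S m j" by simp
    then have "Poly_Mapping.lookup TT (F m) \<noteq> 0" using subm_pair[of "F m" "S m j" TT] sub f by simp
    then show ?thesis using lookT_F by simp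
  qed
qed

lemma not_Gam_T: "\<not> Gam N L TT TT"
proof
  assume "Gam N L TT TT"
  then obtain y1 y2 where A: "AA N L TT y1" "AA N L TT y2" and s: "subm (y1 + y2) TT" unfolding Gam_def by blast
  have s1: "subm y1 TT" and s2: "subm y2 TT" using s unfolding subm_def lookup_add
    by (meson add_leD1 add_leD2)+
  have AAr: "\<exists>y' k. (y, y', k) \<in> reactions N L" if "AA N L TT y" "subm y TT" for y
  proof -
    have "\<not> (\<exists>X. y = sg X \<and> Poly_Mapping.lookup TT X = 0)"
      using subm_sing that(2) by blast
    then show ?thesis using that(1) unfolding AA_def by blast
  qed
  have "\<exists>y' k. (y1, y', k) \<in> reactions N L"
    using AAr A(1) s1 by blast
  then have "y1 = sg W" using T_sub_react s1 by blast
  have "\<exists>y' k. (y2, y', k) \<in> reactions N L"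
    using AAr A(2) s2 by blast
  then have "y2 = sg W" using T_sub_react s2 by blast
  have "Poly_Mapping.lookup (y1 + y2) W \<le> Poly_Mapping.lookup TT W" using s unfolding subm_def by blast
  then show False using \<open>y1 = sg W\<close> \<open>y2 = sg W\<close> lookT_W by (simp add: lookup_add lookup_sg)
qed

lemma q_in: "S n (L n - 1) \<in> species_set N L"
  using n_bounds unfolding species_set_def non_intermediates_def by auto

lemma keys_iterP:
  assumes "Z \<in> Poly_Mapping.keys ((Dt N L ^^ k) P)" "0 < k"
  shows "\<exists>y y' kk. (y, y', kk) \<in> reactions N L \<and> subm y Z"
proof -
  obtain k' where k: "k = Suc k'" using assms(2) by (cases k) auto
  then have "Z \<in> Poly_Mapping.keys (Dt N L ((Dt N L ^^ k') P))" using assms(1) by simp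
  then obtain Z0 where "step N L Z0 Z" using keys_Dt by blast
  then show ?thesis using step_sub by blast
qed

lemma subm_add_mono: "subm y a \<Longrightarrow> subm (y + b) (a + b)"
  unfolding subm_def by (simp add: lookup_add)

lemma subm_refl: "subm y y"
  unfolding subm_def by simp

lemma B_coef:
  "Poly_Mapping.lookup ((Dt N L ^^ k) (Var (S n (L n - 1)) * Var (S (n - 1) (L (n - 1))))) TT
   = Poly_Mapping.lookup ((Dt N L ^^ k) (Var (S (n - 1) (L (n - 1))))) (sg W + M)"
proof -
  let ?q = "S n (L n - 1)" and ?p = "S (n - 1) (L (n - 1))"
  define P where "P k = (Dt N L ^^ k) (Var ?p)" for k
  define R where "R k = (Dt N L ^^ k) (Var ?q * Var ?p) - Var ?q * P k" for k
  have Rsuc: "R (Suc k) = Dt N L (R k) + P k * rhs N L ?q" for k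
  proof -
    have "(Dt N L ^^ Suc k) (Var ?q * Var ?p) = Dt N L (R k + Var ?q * P k)" by (simp add: R_def)
    also have "\<dots> = Dt N L (R k) + (Var ?q * Dt N L (P k) + P k * rhs N L ?q)"
      by (simp only: Dt_add Dt_Var_mult[OF q_in])
    finally show ?thesis by (simp add: R_def[of "Suc k"] P_def)
  qed
  have keysR: "Poly_Mapping.keys (R k) \<subseteq> {Z. Gam N L TT Z}" for k
  proof (induction k)
    case 0 then show ?case by (simp add: R_def P_def)
  next
    case (Suc k)
    show ?case
    proof
      fix Z assume "Z \<in> Poly_Mapping.keys (R (Suc k))"
      then have "Z \<in> Poly_Mapping.keys (Dt N L (R k)) \<union> Poly_Mapping.keys (P k * rhs N L ?q)"
        unfolding Rsuc by (rule subsetD[OF keys_add])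
      then show "Z \<in> {Z. Gam N L TT Z}"
      proof
        assume "Z \<in> Poly_Mapping.keys (Dt N L (R k))"
        then obtain Z0 where Z0: "Z0 \<in> Poly_Mapping.keys (R k)" "step N L Z0 Z" using keys_Dt by blast
        from Z0(1) Suc have "Gam N L TT Z0" by blast
        then have "Gam N L TT Z" using Gam_step Z0(2) by blast
        then show ?thesis by simp
      next
        assume "Z \<in> Poly_Mapping.keys (P k * rhs N L ?q)"
        then have "Z \<in> {a + b |a b. a \<in> Poly_Mapping.keys (P k) \<and> b \<in> Poly_Mapping.keys (rhs N L ?q)}"
          using keys_mult[of "P k" "rhs N L ?q"] by (rule subsetD[rotated])
        then obtain a b where ab: "Z = a + b" "a \<in> Poly_Mapping.keys (P k)" "b \<in> Poly_Mapping.keys (rhs N L ?q)"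
          by blast
        obtain yb kb where "(b, yb, kb) \<in> reactions N L" using keys_rhs[OF ab(3)] by blast
        then have Ab: "AA N L TT b" unfolding AA_def by blast
        show ?thesis
        proof (cases "k = 0")
          case True
          then have a: "a = sg ?p" using ab(2) by (simp add: P_def Var_def sg_def)
          have "AA N L TT (sg ?p)" unfolding AA_def using lookT_p by blast
          moreover have "subm (sg ?p + b) Z" using ab(1) a subm_refl by simp
          ultimately have "Gam N L TT Z" using Ab unfolding Gam_def by blast
          then show ?thesis by simp
        next
          case False
          then obtain y y' kk where yr: "(y, y', kk) \<in> reactions N L" "subm y a"
            using keys_iterP[OF ab(2)[unfolded P_def]] by auto
          have "AA N L TT y" using yr(1) unfolding AA_def by blast
          moreover have "subm (y + b) Z" using ab(1) subm_add_mono[OF yr(2)] by simp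
          ultimately have "Gam N L TT Z" using Ab unfolding Gam_def by blast
          then show ?thesis by simp
        qed
      qed
    qed
  qed
  have R0: "Poly_Mapping.lookup (R k) TT = 0"
    using keysR[of k] not_Gam_T by (auto simp: in_keys_iff)
  have TT_eq: "TT - sg ?q = sg W + M" by (auto simp: pm_eq lookup_add lookup_minus lookup_sg)
  have "(Dt N L ^^ k) (Var ?q * Var ?p) = R k + Var ?q * P k" by (simp add: R_def)
  then have "Poly_Mapping.lookup ((Dt N L ^^ k) (Var ?q * Var ?p)) TT = Poly_Mapping.lookup (Var ?q * P k) TT"
    using R0 by (simp add: lookup_add)
  also have "\<dots> = Poly_Mapping.lookup (P k) (TT - sg ?q)"
    by (simp only: lookup_Var_mult if_P[OF lookT_q])
  also have "\<dots> = Poly_Mapping.lookup (P k) (sg W + M)"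
    by (simp only: TT_eq)
  finally show ?thesis by (simp add: P_def)
qed

lemma lastS_nm1: "lastS L (n - 1) = S (n - 1) (L (n - 1))"
  using n_bounds by (simp add: lastS_def)

lemma lastS_n: "lastS L n = S n (L n)"
  using n_bounds by (simp add: lastS_def)

lemma lookT_s: "Poly_Mapping.lookup TT (S n (L n)) = 0"
  using lookT_S[of n "L n"] Ln by simp

lemma lookT_Sn1: "Poly_Mapping.lookup TT (S (n + 1) b) = 0"
  using lookT_S[of "n + 1" b] by simp

definition Good :: "cplx \<Rightarrow> bool" where
  "Good Z \<longleftrightarrow> Gam N L TT Z \<or> (\<exists>j. Z = sg (U (n + 1) j)) \<or> Z = sg (V n (L n))"

lemma Gam_pair: "Poly_Mapping.lookup TT A = 0 \<Longrightarrow> Poly_Mapping.lookup TT B = 0 \<Longrightarrow> Gam N L TT (sg A + sg B)"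
  unfolding Gam_def AA_def using subm_refl by blast

lemma sg_step: "step N L (sg X) Z' \<Longrightarrow> \<exists>y' k. (Z', y', k) \<in> reactions N L \<and> Poly_Mapping.lookup y' X \<noteq> Poly_Mapping.lookup Z' X"
proof -
  assume "step N L (sg X) Z'"
  then obtain Y y y' k where r: "(y, y', k) \<in> reactions N L" "Poly_Mapping.lookup y' Y \<noteq> Poly_Mapping.lookup y Y"
    "0 < Poly_Mapping.lookup (sg X) Y" "Z' = sg X - sg Y + y" unfolding step_def by blast
  then have "Y = X" by (auto simp: lookup_sg split: if_splits)
  then have "Z' = y" using r(4) by simp
  then show ?thesis using r \<open>Y = X\<close> by blast
qed

lemma Good_step: "Good Z \<Longrightarrow> step N L Z Z' \<Longrightarrow> Good Z'"
proof -
  assume G: "Good Z" and st: "step N L Z Z'"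
  show "Good Z'"
  proof (cases "Gam N L TT Z")
    case True then show ?thesis using Gam_step st unfolding Good_def by blast
  next
    case False
    then consider (u) j where "Z = sg (U (n + 1) j)" | (v) "Z = sg (V n (L n))" using G unfolding Good_def by blast
    then show ?thesis
    proof cases
      case u
      then obtain y' k where r: "(Z', y', k) \<in> reactions N L" "Poly_Mapping.lookup y' (U (n + 1) j) \<noteq> Poly_Mapping.lookup Z' (U (n + 1) j)"
        using sg_step st by blast
      from react_U[OF r] have "Z' = sg (U (n + 1) j) \<or> Z' = sg (S n (L n)) + sg (S (n + 1) (j - 1))"
        using lastS_n by simp
      then show ?thesis unfolding Good_def using Gam_pair[OF lookT_s lookT_Sn1] by blast
    next
      case v
      then obtain y' k where r: "(Z', y', k) \<in> reactions N L" "Poly_Mapping.lookup y' (V n (L n)) \<noteq> Poly_Mapping.lookup Z' (V n (L n))"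
        using sg_step st by blast
      from react_V[OF r] have "Z' = sg (V n (L n)) \<or> Z' = sg (F n) + sg (S n (L n))" .
      then show ?thesis unfolding Good_def using Gam_pair[OF lookT_F lookT_s] by blast
    qed
  qed
qed

lemma not_Good_T: "\<not> Good TT"
proof
  assume "Good TT"
  moreover have "TT \<noteq> sg (U a b)" "TT \<noteq> sg (V a b)" for a b
    using lookT_q by (auto simp: lookup_sg)
  ultimately show False using not_Gam_T unfolding Good_def by blast
qed

lemma rhs_u: "rhs N L (U n (L n)) = Poly_Mapping.single (sg (S (n - 1) (L (n - 1))) + sg (S n (L n - 1))) (rc (RA n (L n)))
   - Poly_Mapping.single (sg (U n (L n))) (rc (RB n (L n)) + rc (RC n (L n)))"
proof -
  let ?u = "U n (L n)" and ?p = "S (n - 1) (L (n - 1))" and ?q = "S n (L n - 1)" and ?s = "S n (L n)"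
  define f where "f = (\<lambda>(y::cplx, y'::cplx, k). Poly_Mapping.single y (rc k * of_int (int (Poly_Mapping.lookup y' ?u) - int (Poly_Mapping.lookup y ?u))))"
  define r1 where "r1 = (sg ?p + sg ?q, sg ?u, RA n (L n))"
  define r2 where "r2 = (sg ?u, sg ?p + sg ?q, RB n (L n))"
  define r3 where "r3 = (sg ?u, sg ?p + sg ?s, RC n (L n))"
  have mem: "r1 \<in> reactions N L" "r2 \<in> reactions N L" "r3 \<in> reactions N L"
    unfolding r1_def r2_def r3_def using reaction_mem[of n N "L n" L] n_bounds Ln lastS_nm1 by auto
  have zero: "f r = 0" if "r \<in> reactions N L - {r1, r2, r3}" for r
  proof -
    obtain y y' k where r: "r = (y, y', k)" by (cases r)
    have rr: "(y, y', k) \<in> reactions N L" and nr: "r \<notin> {r1, r2, r3}" using that r by auto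
    have "Poly_Mapping.lookup y' ?u = Poly_Mapping.lookup y ?u"
    proof (rule ccontr)
      assume "Poly_Mapping.lookup y' ?u \<noteq> Poly_Mapping.lookup y ?u"
      from react_U_full[OF rr this] have "r = r1 \<or> r = r2 \<or> r = r3"
        unfolding r r1_def r2_def r3_def lastS_nm1 .
      then show False using nr by blast
    qed
    then show ?thesis by (simp add: f_def r)
  qed
  have "rhs N L ?u = sum f (reactions N L)" unfolding rhs_alt f_def ..
  also have "\<dots> = sum f {r1, r2, r3}"
  proof (rule sum.mono_neutral_right[OF fin_reactions])
    show "{r1, r2, r3} \<subseteq> reactions N L" using mem by blast
    show "\<forall>i\<in>reactions N L - {r1, r2, r3}. f i = 0" using zero by blast
  qed
  also have "\<dots> = f r1 + f r2 + f r3"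
    by (simp add: r1_def r2_def r3_def)
  also have "f r1 = Poly_Mapping.single (sg ?p + sg ?q) (rc (RA n (L n)))"
    by (simp add: f_def r1_def lookup_add lookup_sg)
  also have "f r2 = Poly_Mapping.single (sg ?u) (- rc (RB n (L n)))"
    by (simp add: f_def r2_def lookup_add lookup_sg)
  also have "f r3 = Poly_Mapping.single (sg ?u) (- rc (RC n (L n)))"
    by (simp add: f_def r3_def lookup_add lookup_sg)
  also have "Poly_Mapping.single (sg ?p + sg ?q) (rc (RA n (L n))) + Poly_Mapping.single (sg ?u) (- rc (RB n (L n))) + Poly_Mapping.single (sg ?u) (- rc (RC n (L n)))
     = Poly_Mapping.single (sg ?p + sg ?q) (rc (RA n (L n))) - Poly_Mapping.single (sg ?u) (rc (RB n (L n)) + rc (RC n (L n)))"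
    by (simp add: single_add single_uminus)
  finally show ?thesis .
qed

lemma rhs_s_split:
  obtains R1 where "rhs N L (S n (L n)) = Poly_Mapping.single (sg (U n (L n))) (rc (RC n (L n))) + R1"
    "Poly_Mapping.keys R1 \<subseteq> {Z. Good Z}"
proof -
  let ?u = "U n (L n)" and ?s = "S n (L n)"
  define f where "f = (\<lambda>(y::cplx, y'::cplx, k). Poly_Mapping.single y (rc k * of_int (int (Poly_Mapping.lookup y' ?s) - int (Poly_Mapping.lookup y ?s))))"
  define r3 where "r3 = (sg ?u, sg (lastS L (n - 1)) + sg ?s, RC n (L n))"
  have mem: "r3 \<in> reactions N L" unfolding r3_def using reaction_mem(3)[of n N "L n" L] n_bounds Ln by auto
  have "rhs N L ?s = sum f (reactions N L)" unfolding rhs_alt f_def ..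
  also have "\<dots> = f r3 + sum f (reactions N L - {r3})" by (rule sum.remove[OF fin_reactions mem])
  also have "f r3 = Poly_Mapping.single (sg ?u) (rc (RC n (L n)))"
    using n_bounds by (auto simp: f_def r3_def lastS_def lookup_add lookup_sg)
  finally have eq: "rhs N L ?s = Poly_Mapping.single (sg ?u) (rc (RC n (L n))) + sum f (reactions N L - {r3})" .
  have "Poly_Mapping.keys (sum f (reactions N L - {r3})) \<subseteq> {Z. Good Z}"
  proof
    fix Z assume "Z \<in> Poly_Mapping.keys (sum f (reactions N L - {r3}))"
    then have "Z \<in> (\<Union>r\<in>reactions N L - {r3}. Poly_Mapping.keys (f r))"
      using keys_sum[of f "reactions N L - {r3}"] by (rule subsetD[rotated])
    then obtain y y' k where r: "(y, y', k) \<in> reactions N L - {r3}" and Zk: "Z \<in> Poly_Mapping.keys (f (y, y', k))"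
      by auto
    from Zk have Zy: "Z = y" and net: "Poly_Mapping.lookup y' ?s \<noteq> Poly_Mapping.lookup y ?s"
      by (auto simp: f_def split: if_splits)
    have rr: "(y, y', k) \<in> reactions N L" and nr: "(y, y', k) \<noteq> r3" using r by auto
    have n1: "1 \<le> n" using n_bounds by simp
    from react_S_last[OF rr net n1] nr
    have "(\<exists>j. y = sg ?s + sg (S (n + 1) (j - 1))) \<or> (\<exists>j. y = sg (U (n + 1) j)) \<or>
         y = sg (F n) + sg ?s \<or> y = sg (V n (L n))" unfolding r3_def by blast
    then have "Good y" unfolding Good_def using Gam_pair[OF lookT_s lookT_Sn1] Gam_pair[OF lookT_F lookT_s] by blast
    then show "Z \<in> {Z. Good Z}" using Zy by simp
  qed
  with eq show ?thesis using that by blast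
qed

lemma A_coef:
  assumes "Poly_Mapping.keys R1 \<subseteq> {Z. Good Z}"
  shows "Poly_Mapping.lookup ((Dt N L ^^ k) R1) TT = 0"
proof -
  have "Poly_Mapping.keys ((Dt N L ^^ k) R1) \<subseteq> {Z. Good Z}"
    by (rule keys_iter_closed[OF _ assms]) (use Good_step in blast)
  then show ?thesis using not_Good_T by (auto simp: in_keys_iff)
qed

lemma u_in: "U n (L n) \<in> species_set N L" and s_in: "S n (L n) \<in> species_set N L"
  using n_bounds Ln unfolding species_set_def intermediates_def non_intermediates_def by auto

lemma single_cmul_Var: "Poly_Mapping.single (sg X) c = cconst c * Var X"
  by (simp add: cconst_def Var_def mult_single)

lemma single_pair: "Poly_Mapping.single (sg A + sg B) c = cconst c * (Var B * Var A)"
  by (simp add: cconst_def Var_def mult_single add.commute)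

lemma lookup_cconst: "Poly_Mapping.lookup (cconst c * P) Z = c * Poly_Mapping.lookup P Z"
  by (simp add: cconst_def lookup_single0_mult)

lemma iter_cconst: "(Dt N L ^^ k) (cconst c * P) = cconst c * (Dt N L ^^ k) P"
  by (simp add: cconst_def iter_cmul)

lemma rc_mult_nz:
  fixes C :: coef
  assumes "C \<noteq> 0"
  shows "rc a * rc b * C \<noteq> 0"
proof -
  obtain t where t: "Poly_Mapping.lookup C t \<noteq> 0" using assms by (metis poly_mapping_eqI lookup_zero)
  have "rc a * rc b = Poly_Mapping.single (Poly_Mapping.single a 1 + Poly_Mapping.single b 1) 1"
    by (simp add: rc_def mult_single)
  then have "Poly_Mapping.lookup (rc a * rc b * C) (Poly_Mapping.single a 1 + Poly_Mapping.single b 1 + t) = Poly_Mapping.lookup C t"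
    by (simp add: lookup_single_mult_add)
  then show ?thesis using t by auto
qed

lemma main_ctx:
  shows "let C  = coeff_of (deriv_iter N L l0 (Var (S (n - 1) (L (n - 1))))) (sg W + M);
             Ct = coeff_of (deriv_iter N L (l0 + 1) (Var (S (n - 1) (L (n - 1))))) (sg W + M);
             Mh = sg (S n (L n - 1)) + sg W + M;
             K  = rc (RB n (L n)) + rc (RC n (L n))
         in coeff_of (deriv_iter N L (l0 + 2) (Var (S n (L n)))) Mh \<noteq> 0
          \<and> (\<forall>l. 1 \<le> l \<and> l < l0 + 2 \<longrightarrow> coeff_of (deriv_iter N L l (Var (S n (L n)))) Mh = 0)
          \<and> coeff_of (deriv_iter N L (l0 + 2) (Var (S n (L n)))) Mh
              = rc (RC n (L n)) * rc (RA n (L n)) * C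
          \<and> coeff_of (deriv_iter N L (l0 + 3) (Var (S n (L n)))) Mh
              = rc (RC n (L n)) * rc (RA n (L n)) * (Ct - K * C)"
proof -
  let ?p = "S (n - 1) (L (n - 1))" and ?q = "S n (L n - 1)" and ?s = "S n (L n)" and ?u = "U n (L n)"
  let ?a = "rc (RA n (L n))" and ?b = "rc (RB n (L n))" and ?c = "rc (RC n (L n))"
  let ?D = "Dt N L"
  define \<gamma> where "\<gamma> k = Poly_Mapping.lookup ((?D ^^ k) (Var ?p)) (sg W + M)" for k
  define \<delta> where "\<delta> k = Poly_Mapping.lookup ((?D ^^ k) (Var ?u)) TT" for k
  define \<sigma> where "\<sigma> k = Poly_Mapping.lookup ((?D ^^ k) (Var ?s)) TT" for k
  obtain R1 where R1: "rhs N L ?s = Poly_Mapping.single (sg ?u) ?c + R1" "Poly_Mapping.keys R1 \<subseteq> {Z. Good Z}"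
    using rhs_s_split by blast
  have Ds: "?D (Var ?s) = cconst ?c * Var ?u + R1"
    using Dt_Var[OF s_in] R1(1) by (simp add: single_cmul_Var)
  have Du: "?D (Var ?u) = cconst ?a * (Var ?q * Var ?p) - cconst (?b + ?c) * Var ?u"
    using Dt_Var[OF u_in] rhs_u by (simp add: single_cmul_Var single_pair)
  have sig: "\<sigma> (Suc k) = ?c * \<delta> k" for k
  proof -
    have "(?D ^^ Suc k) (Var ?s) = (?D ^^ k) (?D (Var ?s))" by (simp add: funpow_swap1)
    also have "\<dots> = cconst ?c * (?D ^^ k) (Var ?u) + (?D ^^ k) R1"
      by (simp add: Ds iter_add iter_cconst)
    finally show ?thesis unfolding \<sigma>_def \<delta>_def using A_coef[OF R1(2)] by (simp add: lookup_add lookup_cconst)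
  qed
  have del: "\<delta> (Suc k) = ?a * \<gamma> k - (?b + ?c) * \<delta> k" for k
  proof -
    have "(?D ^^ Suc k) (Var ?u) = (?D ^^ k) (?D (Var ?u))" by (simp add: funpow_swap1)
    also have "\<dots> = cconst ?a * (?D ^^ k) (Var ?q * Var ?p) - cconst (?b + ?c) * (?D ^^ k) (Var ?u)"
      by (simp add: Du iter_diff iter_cconst)
    finally show ?thesis unfolding \<delta>_def \<gamma>_def using B_coef[of k] by (simp add: lookup_minus lookup_cconst)
  qed
  have del0: "\<delta> 0 = 0"
  proof -
    have "sg ?u \<noteq> TT"
    proof
      assume "sg ?u = TT"
      then have "Poly_Mapping.lookup (sg ?u) ?q = Poly_Mapping.lookup TT ?q" by simp
      then show False using lookT_q by (simp add: lookup_sg)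
    qed
    then show ?thesis by (simp add: \<delta>_def Var_def lookup_single when_def)
  qed
  have gam0: "\<gamma> 0 = 0"
  proof -
    have "sg ?p \<noteq> sg W + M"
    proof
      assume "sg ?p = sg W + M"
      then have "Poly_Mapping.lookup (sg ?p) W = Poly_Mapping.lookup (sg W + M) W" by simp
      moreover have "S (n - 1) (L (n - 1)) \<noteq> W" using W_ne by metis
      ultimately show False by (simp add: lookup_add lookup_sg)
    qed
    then show ?thesis by (simp add: \<gamma>_def Var_def lookup_single when_def)
  qed
  have gam: "\<gamma> k = 0" if "k < l0" for k
    using first that gam0 unfolding \<gamma>_def coeff_of_def deriv_iter_def
    by (cases k) auto
  have delz: "\<delta> k = 0" if "k \<le> l0" for k
    using that
  proof (induction k)
    case 0 then show ?case using del0 by simp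
  next
    case (Suc k) then show ?case using del gam by simp
  qed
  define C where "C = \<gamma> l0"
  define Ct where "Ct = \<gamma> (l0 + 1)"
  have d1: "\<delta> (l0 + 1) = ?a * C" using del[of l0] delz[of l0] by (simp add: C_def)
  have d2: "\<delta> (l0 + 2) = ?a * Ct - (?b + ?c) * (?a * C)"
    using del[of "l0 + 1"] d1 by (simp add: Ct_def)
  have s2: "\<sigma> (l0 + 2) = ?c * ?a * C" using sig[of "l0 + 1"] d1 by (simp add: mult.assoc)
  have s3: "\<sigma> (l0 + 3) = ?c * ?a * (Ct - (?b + ?c) * C)"
  proof -
    have "\<sigma> (l0 + 3) = ?c * \<delta> (l0 + 2)" using sig[of "l0 + 2"] by (simp add: numeral_3_eq_3)
    also have "\<dots> = ?c * (?a * Ct - (?b + ?c) * (?a * C))" by (simp only: d2)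
    also have "\<dots> = ?c * ?a * (Ct - (?b + ?c) * C)" by (simp add: algebra_simps)
    finally show ?thesis .
  qed
  have sz: "\<sigma> l = 0" if "1 \<le> l" "l < l0 + 2" for l
  proof -
    obtain k where "l = Suc k" using \<open>1 \<le> l\<close> by (cases l) auto
    then show ?thesis using sig[of k] delz[of k] that by simp
  qed
  have Cnz: "C \<noteq> 0" using appears unfolding C_def \<gamma>_def coeff_of_def deriv_iter_def .
  show ?thesis
    unfolding Let_def coeff_of_def deriv_iter_def
    using s2 s3 sz rc_mult_nz[OF Cnz, of "RC n (L n)" "RA n (L n)"]
    unfolding \<sigma>_def C_def Ct_def \<gamma>_def by auto
qed

end


theorem mainTheorem18:
  fixes N n l0 :: nat and L :: "nat \<Rightarrow> nat" and W :: species and M :: cplx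
  assumes N_pos: "1 \<le> N"
    and L_pos: "\<forall>m. 1 \<le> m \<and> m \<le> N \<longrightarrow> 1 \<le> L m"
    and n_bounds: "2 \<le> n" "n \<le> N"
    and W_int: "W \<in> intermediates N L"
    and l0_pos: "1 \<le> l0"
    and appears: "coeff_of (deriv_iter N L l0 (Var (S (n - 1) (L (n - 1))))) (sg W + M) \<noteq> 0"
    and first: "\<forall>l. 1 \<le> l \<and> l < l0 \<longrightarrow>
                  coeff_of (deriv_iter N L l (Var (S (n - 1) (L (n - 1))))) (sg W + M) = 0"
    and M_vars: "\<forall>X\<in>Poly_Mapping.keys M. (\<exists>k. 1 \<le> k \<and> k \<le> n - 1 \<and> X \<in> block N L k)
                              \<or> X \<in> block N L (2 * N + 1)"
    and M_noreact: "\<forall>X1\<in>Poly_Mapping.keys M. \<forall>X2\<in>Poly_Mapping.keys M. (X1 \<noteq> X2 \<or> 2 \<le> Poly_Mapping.lookup M X1)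
                              \<longrightarrow> \<not> reacts N L X1 X2"
    and M_nodiv: "Poly_Mapping.lookup M (S (n - 1) (L (n - 1))) = 0"
  shows "let C  = coeff_of (deriv_iter N L l0 (Var (S (n - 1) (L (n - 1))))) (sg W + M);
             Ct = coeff_of (deriv_iter N L (l0 + 1) (Var (S (n - 1) (L (n - 1))))) (sg W + M);
             Mh = sg (S n (L n - 1)) + sg W + M;
             K  = rc (RB n (L n)) + rc (RC n (L n))
         in coeff_of (deriv_iter N L (l0 + 2) (Var (S n (L n)))) Mh \<noteq> 0
          \<and> (\<forall>l. 1 \<le> l \<and> l < l0 + 2 \<longrightarrow> coeff_of (deriv_iter N L l (Var (S n (L n)))) Mh = 0)
          \<and> coeff_of (deriv_iter N L (l0 + 2) (Var (S n (L n)))) Mh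
              = rc (RC n (L n)) * rc (RA n (L n)) * C
          \<and> coeff_of (deriv_iter N L (l0 + 3) (Var (S n (L n)))) Mh
              = rc (RC n (L n)) * rc (RA n (L n)) * (Ct - K * C)"
  by (rule main_ctx[OF N_pos L_pos n_bounds W_int l0_pos appears first M_vars M_noreact M_nodiv])

end
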